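(* For every real $\alpha\in(0,1]$ there exists an infinite $\mathbb{N}^*\setminus Q$--free set $Q\subseteq\mathbb{N}^*$ with $\nu(Q)=\alpha$.
   Context: $\mathbb{N}^*$ denotes the set of positive integers. A set $Q\subseteq\mathbb{N}^*$ is called $\mathbb{N}^*\setminus Q$--free if for every $q\in\mathbb{N}^*$: $q\in Q$ if and only if no $v\in\mathbb{N}^*\setminus Q$ divides $q$. For an infinite set $Q\subseteq\mathbb{N}^*$, its exponent of convergence is $\nu(Q)=\inf\{\nu>0:\sum_{q\in Q}q^{-\nu}<\infty\}$. *)

theory Defs
  imports "HOL-Analysis.Analysis"
begin

text \<open>Positive integers are represented as natural numbers > 0.
  A set Q of positive integers is (N* minus Q)-free if for every positive q:
  q is in Q iff no positive v outside Q divides q.\<close>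
definition complement_free :: "nat set \<Rightarrow> bool" where
  "complement_free Q \<longleftrightarrow>
     (\<forall>q::nat. q > 0 \<longrightarrow> (q \<in> Q \<longleftrightarrow> \<not> (\<exists>v::nat. v > 0 \<and> v \<notin> Q \<and> v dvd q)))"

text \<open>Exponent of convergence, valued in extended reals (infimum of the empty set is +infinity).\<close>
definition exp_conv :: "nat set \<Rightarrow> ereal" where
  "exp_conv Q = Inf {ereal \<nu> | \<nu>::real. \<nu> > 0 \<and> (\<lambda>q::nat. real q powr (- \<nu>)) summable_on Q}"

end

theory Submission imports Defs "HOL-Analysis.Analysis" "HOL-Real_Asymp.Real_Asymp" "HOL-Computational_Algebra.Primes" "HOL-Library.Discrete_Functions" begin

lemma poly_exp_nat: "\<exists>t::nat. 2*(real t+1)^k < 2^t"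
proof -
  have "eventually (\<lambda>t::nat. 2*(real t+1) powr real k < 2 powr real t) at_top"
    by real_asymp
  then obtain t where "2*(real t+1) powr real k < 2 powr real t"
    by (auto simp: eventually_sequentially)
  moreover have "(real t+1) powr real k = (real t+1)^k" by (simp add: powr_realpow)
  moreover have "(2::real) powr real t = 2^t" by (simp add: powr_realpow)
  ultimately show ?thesis by auto
qed

lemma multiples_card: assumes "p > 0" shows "card {n\<in>{1..N}. p dvd (n::nat)} \<le> N div p"
proof -
  have "{n\<in>{1..N}. p dvd n} \<subseteq> (\<lambda>j. p*j) ` {1..N div p}"
  proof
    fix n assume n: "n \<in> {n\<in>{1..N}. p dvd n}"
    then obtain j where j: "n = p*j" by auto
    with n have "j \<ge> 1" by (cases j) auto
    moreover from n j have "p*j \<le> N" by auto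
    hence "j \<le> N div p" using assms by (metis div_le_mono nonzero_mult_div_cancel_left not_gr0)
    ultimately show "n \<in> (\<lambda>j. p*j) ` {1..N div p}" using j by auto
  qed
  hence "card {n\<in>{1..N}. p dvd n} \<le> card ((\<lambda>j. p*j) ` {1..N div p})"
    by (intro card_mono) auto
  also have "\<dots> \<le> card {1..N div p}" by (rule card_image_le) auto
  finally show ?thesis by simp
qed

lemma smooth_card:
  fixes M t :: nat
  shows "card {n\<in>{1..2^t}. \<forall>p. prime p \<and> p dvd n \<longrightarrow> p < M} \<le> (t+1)^M"
proof -
  let ?A = "{n\<in>{1..2^t}. \<forall>p. prime p \<and> p dvd n \<longrightarrow> p < M}"
  define g where "g n = restrict (\<lambda>p. if prime p then multiplicity p n else 0) {..<M}" for n :: nat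
  have inj: "inj_on g ?A"
  proof
    fix x y assume x: "x \<in> ?A" and y: "y \<in> ?A" and e: "g x = g y"
    show "x = y"
    proof (rule multiplicity_eq_nat)
      show "0 < x" "0 < y" using x y by auto
      fix p :: nat assume p: "prime p"
      show "multiplicity p x = multiplicity p y"
      proof (cases "p < M")
        case True
        then show ?thesis using fun_cong[OF e, of p] p by (simp add: g_def)
      next
        case False
        then have "\<not> p dvd x" "\<not> p dvd y" using x y p by auto
        then show ?thesis by (simp add: not_dvd_imp_multiplicity_0)
      qed
    qed
  qed
  have into: "g ` ?A \<subseteq> PiE {..<M} (\<lambda>_. {..t})"
  proof
    fix z assume "z \<in> g ` ?A"
    then obtain n where n: "n \<in> ?A" and z: "z = g n" by auto
    have "\<forall>p<M. (if prime p then multiplicity p n else 0) \<le> t"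
    proof (intro allI impI)
      fix p assume "p < M"
      show "(if prime p then multiplicity p n else 0) \<le> t"
      proof (cases "prime p")
        case False
        then show ?thesis by simp
      next
        case True
        have "p ^ multiplicity p n dvd n" by (rule multiplicity_dvd)
        hence "p ^ multiplicity p n \<le> n" using n by (intro dvd_imp_le) auto
        also have "n \<le> 2^t" using n by auto
        finally have "p ^ multiplicity p n \<le> 2^t" .
        moreover have "2 ^ multiplicity p n \<le> p ^ multiplicity p n"
          using True prime_ge_2_nat by (intro power_mono) auto
        ultimately have "(2::nat) ^ multiplicity p n \<le> 2^t" by linarith
        thus ?thesis using True by simp
      qed
    qed
    thus "z \<in> PiE {..<M} (\<lambda>_. {..t})" using z by (auto simp: g_def)
  qed
  have "card ?A \<le> card (PiE {..<M} (\<lambda>_. {..t}))"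
    by (rule card_inj_on_le[OF inj into]) (simp add: finite_PiE)
  also have "\<dots> = (t+1)^M" by (simp add: card_PiE)
  finally show ?thesis .
qed

lemma primes_recip_unbounded:
  "\<exists>F. finite F \<and> F \<subseteq> {p. prime p \<and> M \<le> p} \<and> B < (\<Sum>p\<in>F. 1/real p)"
proof (rule ccontr)
  assume "\<not> ?thesis"
  hence H: "\<And>F. finite F \<Longrightarrow> F \<subseteq> {p. prime p \<and> M \<le> p} \<Longrightarrow> (\<Sum>p\<in>F. 1/real p) \<le> B"
    by (meson not_le)
  define f where "f n = (\<Sum>p\<in>{p. prime p \<and> M \<le> p \<and> p < n}. 1/real p)" for n :: nat
  have fin: "finite {p. prime p \<and> a \<le> p \<and> p < n}" for a n :: nat by (rule finite_subset[of _ "{..<n}"]) auto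
  have inc: "incseq f"
    unfolding incseq_def f_def by (intro allI impI sum_mono2 fin) auto
  have bd: "\<forall>i. f i \<le> B" unfolding f_def by (intro allI H fin) auto
  obtain L where lim: "f \<longlonglongrightarrow> L" and le: "\<forall>i. f i \<le> L" using incseq_convergent[OF inc bd] by blast
  have "eventually (\<lambda>n. dist (f n) L < 1/2) sequentially" using lim unfolding tendsto_iff by (metis half_gt_zero_iff zero_less_one)
  then obtain N0 where N0: "dist (f N0) L < 1/2" by (auto simp: eventually_sequentially)
  define M' where "M' = max M N0"
  have S: "(\<Sum>p\<in>{p. prime p \<and> M' \<le> p \<and> p < n}. 1/real p) < 1/2" for n
  proof (cases "n \<le> M'")
    case True
    then have "{p. prime p \<and> M' \<le> p \<and> p < n} = {}" by auto
    then show ?thesis by (simp only: sum.empty)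
  next
    case False
    have split: "{p. prime p \<and> M \<le> p \<and> p < n} = {p. prime p \<and> M \<le> p \<and> p < M'} \<union> {p. prime p \<and> M' \<le> p \<and> p < n}"
      using False by (auto simp: M'_def)
    have "f n = f M' + (\<Sum>p\<in>{p. prime p \<and> M' \<le> p \<and> p < n}. 1/real p)"
      unfolding f_def split by (subst sum.union_disjoint) (auto intro: fin)
    moreover have "f N0 \<le> f M'" using inc by (simp add: incseq_def M'_def)
    moreover have "f n \<le> L" using le by auto
    moreover have "L - f N0 < 1/2" using N0 le by (simp add: dist_real_def)
    ultimately show ?thesis by linarith
  qed
  obtain t where t: "2*(real t+1)^M' < 2^t" using poly_exp_nat by blast
  define N :: nat where "N = 2^t"
  define PP where "PP = {p. prime p \<and> M' \<le> p \<and> p < N+1}"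
  define A1 where "A1 = (\<Union>p\<in>PP. {n\<in>{1..N}. p dvd n})"
  define A2 where "A2 = {n\<in>{1..2^t}. \<forall>p. prime p \<and> p dvd n \<longrightarrow> p < M'}"
  have finPP: "finite PP" unfolding PP_def by (rule fin)
  have sub: "{1..N} \<subseteq> A1 \<union> A2"
  proof
    fix n assume n: "n \<in> {1..N}"
    show "n \<in> A1 \<union> A2"
    proof (cases "\<exists>p. prime p \<and> p dvd n \<and> M' \<le> p")
      case True
      then obtain p where p: "prime p" "p dvd n" "M' \<le> p" by blast
      have "p \<le> n" using p n by (intro dvd_imp_le) auto
      then have "p \<in> PP" using p n by (auto simp: PP_def)
      then show ?thesis using p n by (auto simp: A1_def)
    next
      case False
      then show ?thesis using n by (auto simp: A2_def N_def not_le)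
    qed
  qed
  have "real (card A1) \<le> real (\<Sum>p\<in>PP. card {n\<in>{1..N}. p dvd n})"
    unfolding A1_def by (intro of_nat_mono card_UN_le finPP)
  also have "\<dots> \<le> (\<Sum>p\<in>PP. real N / real p)"
    unfolding of_nat_sum
  proof (intro sum_mono)
    fix p assume "p \<in> PP"
    then have p: "p > 0" by (auto simp: PP_def prime_gt_0_nat)
    have "real (card {n\<in>{1..N}. p dvd n}) \<le> real (N div p)"
      using multiples_card[OF p] by (intro of_nat_mono) auto
    also have "\<dots> \<le> real N / real p" by (rule of_nat_div_le_of_nat)
    finally show "real (card {n\<in>{1..N}. p dvd n}) \<le> real N / real p" .
  qed
  also have "\<dots> = real N * (\<Sum>p\<in>PP. 1 / real p)"
    by (simp add: sum_distrib_left)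
  also have "\<dots> \<le> real N * (1/2)"
    using S[of "N+1"] unfolding PP_def by (intro mult_left_mono) auto
  finally have c1: "real (card A1) \<le> real N / 2" by simp
  have c2: "real (card A2) \<le> (real t + 1)^M'"
    using smooth_card[of t M'] unfolding A2_def
    by (metis (no_types, lifting) of_nat_1 of_nat_add of_nat_le_iff of_nat_power)
  have "real N = real (card {1..N})" by simp
  also have "\<dots> \<le> real (card (A1 \<union> A2))"
    by (intro of_nat_mono card_mono sub) (auto simp: A1_def A2_def finPP)
  also have "\<dots> \<le> real (card A1) + real (card A2)"
    using card_Un_le[of A1 A2] by linarith
  finally have "real N \<le> real N / 2 + (real t + 1)^M'" using c1 c2 by linarith
  then show False using t by (simp add: N_def)
qed

definition cnt :: "nat \<Rightarrow> nat \<Rightarrow> nat" where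
  "cnt k L = card {p. prime p \<and> 2^k \<le> p \<and> p < 2^k + L}"
definition Lb :: "real \<Rightarrow> nat \<Rightarrow> nat" where
  "Lb a k = Max {L. L \<le> 2^k \<and> real (cnt k L) \<le> 2 powr (a * real k)}"
definition Sb :: "real \<Rightarrow> nat \<Rightarrow> nat set" where
  "Sb a k = {p. prime p \<and> 2^k \<le> p \<and> p < 2^k + Lb a k}"
definition QS :: "real \<Rightarrow> nat set" where
  "QS a = insert 1 (\<Union>k. Sb a k)"

lemma Lb_fin: "finite {L. L \<le> 2^k \<and> real (cnt k L) \<le> 2 powr (a * real k)}"
  by (rule finite_subset[of _ "{..2^k}"]) auto

lemma Lb_in: "Lb a k \<le> 2^k \<and> real (cnt k (Lb a k)) \<le> 2 powr (a * real k)"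
proof -
  have "0 \<in> {L. L \<le> 2^k \<and> real (cnt k L) \<le> 2 powr (a * real k)}"
  proof -
    have e: "{p. prime p \<and> 2^k \<le> p \<and> p < (2::nat)^k} = {}" by auto
    have "cnt k 0 = 0" unfolding cnt_def by (simp add: e)
    then show ?thesis by simp
  qed
  then have "Lb a k \<in> {L. L \<le> 2^k \<and> real (cnt k L) \<le> 2 powr (a * real k)}"
    unfolding Lb_def using Lb_fin by (intro Max_in) auto
  then show ?thesis by simp
qed

lemma Lb_ge: "L \<le> 2^k \<Longrightarrow> real (cnt k L) \<le> 2 powr (a * real k) \<Longrightarrow> L \<le> Lb a k"
  unfolding Lb_def using Lb_fin by (intro Max_ge) auto

lemma cnt_Suc: "cnt k (Suc L) \<le> Suc (cnt k L)"
proof -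
  have fin: "finite {p. prime p \<and> 2^k \<le> p \<and> p < 2^k + L}"
    by (rule finite_subset[of _ "{..<2^k+L}"]) auto
  have "{p. prime p \<and> 2^k \<le> p \<and> p < 2^k + Suc L} \<subseteq> insert (2^k+L) {p. prime p \<and> 2^k \<le> p \<and> p < 2^k + L}"
    by auto
  then have "cnt k (Suc L) \<le> card (insert (2^k+L) {p. prime p \<and> 2^k \<le> p \<and> p < 2^k + L})"
    unfolding cnt_def using fin by (intro card_mono) auto
  also have "\<dots> \<le> Suc (cnt k L)" unfolding cnt_def using fin by (simp add: card_insert_if)
  finally show ?thesis .
qed

lemma Sb_fin: "finite (Sb a k)"
  unfolding Sb_def by (rule finite_subset[of _ "{..<2^k+Lb a k}"]) auto

lemma card_Sb: "card (Sb a k) = cnt k (Lb a k)"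
  by (simp add: Sb_def cnt_def)

lemma Sb_range: "p \<in> Sb a k \<Longrightarrow> prime p \<and> 2^k \<le> p \<and> p < 2^(k+1)"
  using Lb_in[of a k] by (auto simp: Sb_def)

lemma Sb_full: "Lb a k < 2^k \<Longrightarrow> real (card (Sb a k)) > 2 powr (a * real k) - 1"
proof -
  assume lt: "Lb a k < 2^k"
  have "\<not> real (cnt k (Suc (Lb a k))) \<le> 2 powr (a * real k)"
    using Lb_ge[of "Suc (Lb a k)" k a] lt by auto
  moreover have "real (cnt k (Suc (Lb a k))) \<le> real (cnt k (Lb a k)) + 1"
    using cnt_Suc[of k "Lb a k"] by linarith
  ultimately show ?thesis by (simp add: card_Sb)
qed

lemma Sb_all: "Lb a k = 2^k \<Longrightarrow> prime p \<Longrightarrow> 2^k \<le> p \<Longrightarrow> p < 2^(k+1) \<Longrightarrow> p \<in> Sb a k"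
  by (auto simp: Sb_def)

lemma block_unique: "2^k \<le> (p::nat) \<Longrightarrow> p < 2^(k+1) \<Longrightarrow> 2^j \<le> p \<Longrightarrow> p < 2^(j+1) \<Longrightarrow> k = j"
proof (rule ccontr)
  assume a: "2^k \<le> (p::nat)" "p < 2^(k+1)" "2^j \<le> p" "p < 2^(j+1)" "k \<noteq> j"
  show False
  proof (cases "k < j")
    case True
    then have "(2::nat)^(k+1) \<le> 2^j" by (intro power_increasing) auto
    then show False using a by linarith
  next
    case False
    then have "(2::nat)^(j+1) \<le> 2^k" using a(5) by (intro power_increasing) auto
    then show False using a by linarith
  qed
qed

lemma Sb_disj: "k \<noteq> j \<Longrightarrow> Sb a k \<inter> Sb a j = {}"
  using Sb_range block_unique by blast

lemma Sb_sum_upper: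
  assumes "\<nu> > 0"
  shows "(\<Sum>p\<in>Sb a k. real p powr (-\<nu>)) \<le> (2 powr (a - \<nu>))^k"
proof -
  have "(\<Sum>p\<in>Sb a k. real p powr (-\<nu>)) \<le> real (card (Sb a k)) * (2^k) powr (-\<nu>)"
  proof (rule sum_bounded_above)
    fix p assume "p \<in> Sb a k"
    then have "2^k \<le> p" using Sb_range by blast
    then have "real (2^k) \<le> real p" by (simp only: of_nat_le_iff)
    then show "real p powr (-\<nu>) \<le> (2^k) powr (-\<nu>)" using assms by (intro powr_mono2') auto
  qed
  also have "\<dots> \<le> 2 powr (a * real k) * (2^k) powr (-\<nu>)"
    using Lb_in[of a k] by (intro mult_right_mono) (auto simp: card_Sb)
  also have "(2::real)^k = 2 powr (real k)" by (simp add: powr_realpow)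
  also have "2 powr (a * real k) * (2 powr (real k)) powr (-\<nu>) = 2 powr ((a - \<nu>) * real k)"
    by (simp add: powr_powr powr_add[symmetric] algebra_simps)
  also have "\<dots> = (2 powr (a - \<nu>)) ^ k"
    by (simp add: powr_powr[symmetric] powr_realpow)
  finally show ?thesis .
qed

lemma QS_summable:
  assumes "a < \<nu>"  "0 < \<nu>"
  shows "(\<lambda>q::nat. real q powr (-\<nu>)) summable_on QS a"
proof (rule nonneg_bdd_above_summable_on)
  define r where "r = (2::real) powr (a - \<nu>)"
  have r: "0 < r" "r < 1" unfolding r_def using assms by (auto intro: powr_less_one)
  show "bdd_above (sum (\<lambda>q::nat. real q powr (-\<nu>)) ` {F. F \<subseteq> QS a \<and> finite F})"
  proof (rule bdd_aboveI2)
    fix F assume F: "F \<in> {F. F \<subseteq> QS a \<and> finite F}"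
    define K where "K = Suc (Max (insert 0 F))"
    have sub: "F \<subseteq> insert 1 (\<Union>k<K. Sb a k)"
    proof
      fix p assume p: "p \<in> F"
      show "p \<in> insert 1 (\<Union>k<K. Sb a k)"
      proof (cases "p = 1")
        case False
        then obtain k where k: "p \<in> Sb a k" using p F by (auto simp: QS_def)
        have "p \<le> Max (insert 0 F)" using p F by auto
        hence "p < K" by (simp add: K_def)
        moreover have "2^k \<le> p" using Sb_range[OF k] by blast
        moreover have "k < 2^k" by (rule less_exp)
        ultimately have "k < K" by linarith
        then show ?thesis using k by auto
      qed simp
    qed
    have finU: "finite (\<Union>k<K. Sb a k)" using Sb_fin by auto
    have "(\<Sum>q\<in>F. real q powr (-\<nu>)) \<le> (\<Sum>q\<in>insert 1 (\<Union>k<K. Sb a k). real q powr (-\<nu>))"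
      using sub finU by (intro sum_mono2) auto
    also have "\<dots> \<le> 1 + (\<Sum>q\<in>(\<Union>k<K. Sb a k). real q powr (-\<nu>))"
      using finU by (simp add: sum.insert_if)
    also have "(\<Sum>q\<in>(\<Union>k<K. Sb a k). real q powr (-\<nu>)) = (\<Sum>k<K. \<Sum>q\<in>Sb a k. real q powr (-\<nu>))"
      by (rule sum.UNION_disjoint) (auto simp: Sb_fin dest: Sb_disj)
    also have "\<dots> \<le> (\<Sum>k<K. r^k)"
      unfolding r_def using assms by (intro sum_mono Sb_sum_upper) auto
    also have "\<dots> = (1 - r^K) / (1 - r)" using r by (simp add: sum_gp_strict)
    also have "\<dots> \<le> 1 / (1 - r)" using r by (intro divide_right_mono) auto
    finally show "(\<Sum>q\<in>F. real q powr (-\<nu>)) \<le> 1 + 1 / (1 - r)" by simp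
  qed
qed simp

lemma QS_not_summable:
  assumes "0 < \<nu>" "\<nu> < a" "a \<le> 1"
  shows "\<not> (\<lambda>q::nat. real q powr (-\<nu>)) summable_on QS a"
proof
  let ?f = "\<lambda>q::nat. real q powr (-\<nu>)"
  assume sm: "?f summable_on QS a"
  define B where "B = infsum ?f (QS a)"
  have bnd: "\<And>F. finite F \<Longrightarrow> F \<subseteq> QS a \<Longrightarrow> sum ?f F \<le> B"
    unfolding B_def by (rule finite_sum_le_infsum[OF sm]) auto
  have "eventually (\<lambda>k::nat. B < (2 powr (a*real k) - 1) * 2 powr (-\<nu>*(real k+1))) at_top"
    using assms by real_asymp
  then obtain K where K: "\<And>k. k \<ge> K \<Longrightarrow> B < (2 powr (a*real k) - 1) * 2 powr (-\<nu>*(real k+1))"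
    by (auto simp: eventually_sequentially)
  have full: "Lb a k = 2^k" if k: "k \<ge> K" for k
  proof (rule ccontr)
    assume "Lb a k \<noteq> 2^k"
    then have lt: "Lb a k < 2^k" using Lb_in[of a k] by auto
    have "(2 powr (a*real k) - 1) * 2 powr (-\<nu>*(real k+1)) \<le> real (card (Sb a k)) * 2 powr (-\<nu>*(real k+1))"
      using Sb_full[OF lt] by (intro mult_right_mono) auto
    also have "\<dots> \<le> sum ?f (Sb a k)"
    proof (rule sum_bounded_below)
      fix p assume "p \<in> Sb a k"
      then have "p < 2^(k+1)" "p > 0" using Sb_range prime_gt_0_nat by blast+
      then have "real p \<le> 2 powr (real k + 1)"
      proof -
        have "real p \<le> real ((2::nat)^(k+1))" by (simp only: of_nat_le_iff) (use \<open>p < 2^(k+1)\<close> in linarith)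
        also have "\<dots> = 2 powr (real (k+1))" by (subst powr_realpow) auto
        finally show ?thesis by (simp add: add.commute)
      qed
      then have "(2 powr (real k + 1)) powr (-\<nu>) \<le> real p powr (-\<nu>)"
        using assms \<open>p > 0\<close> by (intro powr_mono2') auto
      also have "(2 powr (real k + 1)) powr (-\<nu>) = 2 powr (-\<nu>*(real k+1))"
        by (simp add: powr_powr algebra_simps)
      finally show "2 powr (-\<nu>*(real k+1)) \<le> real p powr (-\<nu>)" .
    qed
    also have "\<dots> \<le> B" using Sb_fin by (intro bnd) (auto simp: QS_def)
    finally show False using K[OF k] by linarith
  qed
  have inQ: "p \<in> QS a" if p: "prime p" "2^K \<le> p" for p
  proof -
    define k where "k = floor_log p"
    have p0: "p > 0" using p prime_gt_0_nat by blast
    have k1: "2^k \<le> p" unfolding k_def using floor_log_exp2_le[OF p0] .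
    have k2: "p < 2^(k+1)" unfolding k_def using floor_log_exp2_gt[of p] by simp
    have "K \<le> k"
    proof (rule ccontr)
      assume "\<not> K \<le> k"
      then have "(2::nat)^(k+1) \<le> 2^K" by (intro power_increasing) auto
      then show False using k2 p by linarith
    qed
    then have "p \<in> Sb a k" using full Sb_all p k1 k2 by blast
    then show ?thesis by (auto simp: QS_def)
  qed
  obtain F where F: "finite F" "F \<subseteq> {p. prime p \<and> 2^K \<le> p}" "B < (\<Sum>p\<in>F. 1/real p)"
    using primes_recip_unbounded[of "2^K" B] by (elim exE conjE) (rule that)
  have "(\<Sum>p\<in>F. 1/real p) \<le> sum ?f F"
  proof (rule sum_mono)
    fix p assume "p \<in> F"
    then have "prime p" using F(2) by blast
    then have p1: "1 \<le> real p" using prime_ge_1_nat by simp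
    have "real p powr (-1) \<le> real p powr (-\<nu>)"
      using assms p1 by (intro powr_mono) auto
    then show "1/real p \<le> real p powr (-\<nu>)" using p1 by (simp add: powr_minus_divide)
  qed
  also have "\<dots> \<le> B"
  proof (rule bnd[OF F(1)])
    show "F \<subseteq> QS a" using F(2) inQ by blast
  qed
  finally show False using F by linarith
qed

theorem mainTheorem7:
  fixes \<alpha> :: real
  assumes "0 < \<alpha>" and "\<alpha> \<le> 1"
  shows "\<exists>Q::nat set. Q \<subseteq> {0<..} \<and> infinite Q \<and> complement_free Q \<and> exp_conv Q = ereal \<alpha>"
proof (intro exI conjI)
  let ?Q = "QS \<alpha>"
  show "?Q \<subseteq> {0<..}"
    unfolding QS_def using Sb_range prime_gt_0_nat by fastforce
  show "infinite ?Q"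
  proof
    assume "finite ?Q"
    then have "(\<lambda>q::nat. real q powr (-(\<alpha>/2))) summable_on ?Q" by (rule summable_on_finite)
    moreover have "\<not> (\<lambda>q::nat. real q powr (-(\<alpha>/2))) summable_on ?Q"
      using assms by (intro QS_not_summable) auto
    ultimately show False by blast
  qed
  show "complement_free ?Q"
    unfolding complement_free_def
  proof (intro allI impI iffI)
    fix q :: nat assume q: "q > 0" "q \<in> ?Q"
    show "\<not> (\<exists>v. v > 0 \<and> v \<notin> ?Q \<and> v dvd q)"
    proof
      assume "\<exists>v. v > 0 \<and> v \<notin> ?Q \<and> v dvd q"
      then obtain v where v: "v \<notin> ?Q" "v dvd q" by blast
      show False
      proof (cases "q = 1")
        case True
        then show False using v by (auto simp: QS_def)
      next
        case False
        then have "prime q" using q Sb_range by (auto simp: QS_def)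
        then have "v = 1 \<or> v = q" using v(2) prime_nat_iff by blast
        then show False using v q by (auto simp: QS_def)
      qed
    qed
  next
    fix q :: nat assume q: "q > 0" "\<not> (\<exists>v. v > 0 \<and> v \<notin> ?Q \<and> v dvd q)"
    show "q \<in> ?Q"
    proof (rule ccontr)
      assume "q \<notin> ?Q"
      then have "\<exists>v. v > 0 \<and> v \<notin> ?Q \<and> v dvd q" using q(1) by (intro exI[of _ q]) simp
      then show False using q(2) by contradiction
    qed
  qed
  show "exp_conv ?Q = ereal \<alpha>"
    unfolding exp_conv_def
  proof (rule Inf_eqI)
    fix i assume "i \<in> {ereal \<nu> |\<nu>. 0 < \<nu> \<and> (\<lambda>q. real q powr - \<nu>) summable_on ?Q}"
    then obtain \<nu> where i: "i = ereal \<nu>" "0 < \<nu>" "(\<lambda>q::nat. real q powr - \<nu>) summable_on ?Q" by blast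
    have "\<not> \<nu> < \<alpha>" using QS_not_summable[of \<nu> \<alpha>] i assms by blast
    then show "ereal \<alpha> \<le> i" using i by simp
  next
    fix y assume y: "\<And>i. i \<in> {ereal \<nu> |\<nu>. 0 < \<nu> \<and> (\<lambda>q. real q powr - \<nu>) summable_on ?Q} \<Longrightarrow> y \<le> i"
    show "y \<le> ereal \<alpha>"
    proof (rule ereal_le_epsilon2)
      fix e :: real assume e: "0 < e"
      have "(\<lambda>q::nat. real q powr - (\<alpha> + e)) summable_on ?Q"
        using assms e by (intro QS_summable) auto
      then have "y \<le> ereal (\<alpha> + e)" using assms e by (intro y) auto
      then show "y \<le> ereal \<alpha> + ereal e" by simp
    qed
  qed
qed

end
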